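(* Let $0\le\alpha\le1/4$, $\beta=(1-4\alpha)/2$, and let $\mathbf P_\alpha$ be the corner/stick law on $\mathbb Z^2$. If $1/8\le\alpha\le1/4$, then for every $A\subseteq\mathcal N_o$, $$\mathbf P_{1/2}[N(o)\cap A\neq\emptyset]\le \mathbf P_\alpha[N(o)\cap A\neq\emptyset],$$ where $\mathbf P_{1/2}$ is the local i.i.d. law with parameter $1/2$. Consequently $\mathbb P_{1/2}[o\rightsquigarrow\partial B_n]\le\mathbb P_\alpha[o\rightsquigarrow\partial B_n]$ for all $n$.
   Context: On $\mathbb Z^2$, $\mathcal N_o=\{\text{north},\text{south},\text{east},\text{west}\}$ (the four unit vectors). The corner/stick law $\mathbf P_\alpha$ is the law of a random 2-element subset $N(o)\subseteq\mathcal N_o$ that equals each of the four "corner" pairs $\{$north,east$\}$, $\{$north,west$\}$, $\{$south,east$\}$, $\{$south,west$\}$ with probability $\alpha$ and each of the two "stick" pairs $\{$north,south$\}$, $\{$east,west$\}$ with probability $\beta$, where $4\alpha+2\beta=1$. $\mathbf P_{1/2}$: each element of $\mathcal N_o$ is included independently with probability $1/2$. $\mathbb P_\alpha,\mathbb P_{1/2}$ are the product laws on $\mathbb Z^2$ (each vertex $u$ independently samples its translated set $N(u)$), defining a directed graph with edges $(u,v)$, $v\in N(u)$; $B_n=\{x:\|x\|_1\le n\}$, $\partial B_n=B_{n+1}\setminus B_n$, and $\{o\rightsquigarrow\partial B_n\}$ is the event that a directed path from the origin reaches $\partial B_n$. *)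

theory Defs
  imports "HOL-Probability.Probability"
begin

datatype dir = North | South | East | West

lemma UNIV_dir: "(UNIV :: dir set) = {North, South, East, West}"
  by (auto intro: dir.exhaust)

definition dir_vec :: "dir \<Rightarrow> int \<times> int" where
  "dir_vec d = (case d of North \<Rightarrow> (0, 1) | South \<Rightarrow> (0, -1)
                 | East \<Rightarrow> (1, 0) | West \<Rightarrow> (-1, 0))"

definition corner_pairs :: "dir set set" where
  "corner_pairs = {{North, East}, {North, West}, {South, East}, {South, West}}"

definition stick_pairs :: "dir set set" where
  "stick_pairs = {{North, South}, {East, West}}"

text \<open>Corner/stick law P_alpha on subsets of the four neighbours of the origin,
  with beta = (1 - 4 alpha)/2 (meaningful for 0 \<le> alpha \<le> 1/4).\<close>
definition corner_stick :: "real \<Rightarrow> dir set pmf" where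
  "corner_stick \<alpha> = embed_pmf (\<lambda>S. if S \<in> corner_pairs then \<alpha>
        else if S \<in> stick_pairs then (1 - 4 * \<alpha>) / 2 else 0)"

definition iid_law :: "real \<Rightarrow> dir set pmf" where
  "iid_law p = map_pmf (\<lambda>b. {d. b d}) (Pi_pmf UNIV False (\<lambda>_. bernoulli_pmf p))"

text \<open>Product law on Z^2: configurations assign to each vertex u its set N(u)
  (of directions; the out-neighbours are u + dir_vec d).\<close>
definition product_law :: "dir set pmf \<Rightarrow> ((int \<times> int) \<Rightarrow> dir set) measure" where
  "product_law P = PiM UNIV (\<lambda>_. measure_pmf P)"

definition edge :: "((int \<times> int) \<Rightarrow> dir set) \<Rightarrow> int \<times> int \<Rightarrow> int \<times> int \<Rightarrow> bool" where
  "edge \<omega> u v \<longleftrightarrow> (\<exists>d \<in> \<omega> u. v = u + dir_vec d)"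

definition l1norm :: "int \<times> int \<Rightarrow> int" where
  "l1norm x = \<bar>fst x\<bar> + \<bar>snd x\<bar>"

text \<open>B_n = {x. |x|_1 \<le> n}; boundary = B_{n+1} - B_n = {x. |x|_1 = n+1}.\<close>
definition boundary :: "nat \<Rightarrow> (int \<times> int) set" where
  "boundary n = {x. l1norm x = int n + 1}"

definition reaches_boundary :: "nat \<Rightarrow> ((int \<times> int) \<Rightarrow> dir set) set" where
  "reaches_boundary n = {\<omega>. \<exists>v \<in> boundary n. (edge \<omega>)\<^sup>*\<^sup>* (0, 0) v}"

end

theory Submission
  imports Defs
begin


lemma l1_step: "l1norm (u + dir_vec d) \<le> l1norm u + 1"
  by (cases u; cases d) (auto simp: l1norm_def dir_vec_def)

definition edgeB :: "nat \<Rightarrow> ((int \<times> int) \<Rightarrow> dir set) \<Rightarrow> int \<times> int \<Rightarrow> int \<times> int \<Rightarrow> bool" where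
  "edgeB n \<omega> u v \<longleftrightarrow> l1norm u \<le> int n \<and> edge \<omega> u v"

lemma rb_iff: "\<omega> \<in> reaches_boundary n \<longleftrightarrow> (\<exists>v\<in>boundary n. (edgeB n \<omega>)\<^sup>*\<^sup>* (0,0) v)"
proof
  assume "\<exists>v\<in>boundary n. (edgeB n \<omega>)\<^sup>*\<^sup>* (0,0) v"
  then obtain v where v: "v \<in> boundary n" "(edgeB n \<omega>)\<^sup>*\<^sup>* (0,0) v" by blast
  have "(edge \<omega>)\<^sup>*\<^sup>* (0,0) v"
    using v(2) by (rule rtranclp_mono[THEN predicate2D, rotated]) (auto simp: edgeB_def)
  with v(1) show "\<omega> \<in> reaches_boundary n" by (auto simp: reaches_boundary_def)
next
  assume "\<omega> \<in> reaches_boundary n"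
  then obtain v where v: "v \<in> boundary n" "(edge \<omega>)\<^sup>*\<^sup>* (0,0) v"
    by (auto simp: reaches_boundary_def)
  have "((edgeB n \<omega>)\<^sup>*\<^sup>* (0,0) w \<and> l1norm w \<le> int n) \<or> (\<exists>v\<in>boundary n. (edgeB n \<omega>)\<^sup>*\<^sup>* (0,0) v)"
    if "(edge \<omega>)\<^sup>*\<^sup>* (0,0) w" for w
    using that
  proof (induction rule: rtranclp_induct)
    case base
    then show ?case by (simp add: l1norm_def)
  next
    case (step y z)
    from step.IH show ?case
    proof
      assume a: "(edgeB n \<omega>)\<^sup>*\<^sup>* (0,0) y \<and> l1norm y \<le> int n"
      then have e: "edgeB n \<omega> y z" using step.hyps(2) by (simp add: edgeB_def)
      with a have r: "(edgeB n \<omega>)\<^sup>*\<^sup>* (0,0) z" by (meson rtranclp.rtrancl_into_rtrancl)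
      from step.hyps(2) obtain d where "z = y + dir_vec d" by (auto simp: edge_def)
      then have "l1norm z \<le> l1norm y + 1" using l1_step by simp
      show ?case
      proof (cases "l1norm z \<le> int n")
        case False
        then have "z \<in> boundary n" using \<open>l1norm z \<le> l1norm y + 1\<close> a by (simp add: boundary_def)
        then show ?thesis using r by blast
      qed (use r in blast)
    qed blast
  qed
  from this[OF v(2)] v(1) show "\<exists>v\<in>boundary n. (edgeB n \<omega>)\<^sup>*\<^sup>* (0,0) v"
    unfolding boundary_def by force
qed

definition Bset :: "nat \<Rightarrow> (int \<times> int) set" where
  "Bset n = {x. l1norm x \<le> int n}"

lemma finite_Bset: "finite (Bset n)"
proof (rule finite_subset)
  show "Bset n \<subseteq> {-int n..int n} \<times> {-int n..int n}"
    by (auto simp: Bset_def l1norm_def)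
qed auto

lemma rb_local:
  assumes "\<And>u. u \<in> Bset n \<Longrightarrow> \<omega> u = \<omega>' u"
  shows "\<omega> \<in> reaches_boundary n \<longleftrightarrow> \<omega>' \<in> reaches_boundary n"
proof -
  have "edgeB n \<omega> = edgeB n \<omega>'"
    using assms by (auto simp: fun_eq_iff edgeB_def edge_def Bset_def)
  then show ?thesis by (simp add: rb_iff)
qed

definition good :: "(('k \<Rightarrow> dir set) \<Rightarrow> bool) \<Rightarrow> bool" where
  "good G \<longleftrightarrow> (\<forall>\<omega> u. \<exists>c A. \<forall>S. G ((fun_upd \<omega> u S)) = (c \<or> S \<inter> A \<noteq> {}))"

lemma good_rb: "good (\<lambda>\<omega>. \<omega> \<in> reaches_boundary n)"
  unfolding good_def
proof (intro allI)
  fix \<omega> :: "int \<times> int \<Rightarrow> dir set" and u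
  define \<omega>0 where "\<omega>0 = (fun_upd \<omega> u {})"
  define r where "r = (edge \<omega>0)\<^sup>*\<^sup>* (0,0) u"
  define A where "A = (if r then {d. \<exists>v\<in>boundary n. (edge \<omega>0)\<^sup>*\<^sup>* (u + dir_vec d) v} else {})"
  have mono: "(edge \<omega>0)\<^sup>*\<^sup>* a b \<Longrightarrow> (edge ((fun_upd \<omega> u S)))\<^sup>*\<^sup>* a b" for a b S
    by (erule rtranclp_mono[THEN predicate2D, rotated]) (force simp: \<omega>0_def edge_def)
  have "\<forall>S. ((fun_upd \<omega> u S) \<in> reaches_boundary n) = (\<omega>0 \<in> reaches_boundary n \<or> S \<inter> A \<noteq> {})"
  proof (intro allI iffI)
    fix S
    assume "\<omega>0 \<in> reaches_boundary n \<or> S \<inter> A \<noteq> {}"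
    then show "(fun_upd \<omega> u S) \<in> reaches_boundary n"
    proof
      assume "\<omega>0 \<in> reaches_boundary n"
      then show ?thesis using mono unfolding reaches_boundary_def by blast
    next
      assume "S \<inter> A \<noteq> {}"
      then obtain d v where d: "d \<in> S" r "v \<in> boundary n" "(edge \<omega>0)\<^sup>*\<^sup>* (u + dir_vec d) v"
        by (auto simp: A_def split: if_splits)
      have "(edge ((fun_upd \<omega> u S)))\<^sup>*\<^sup>* (0,0) u" using d(2) mono by (simp add: r_def)
      moreover have "edge ((fun_upd \<omega> u S)) u (u + dir_vec d)" using d(1) by (auto simp: edge_def)
      ultimately have "(edge ((fun_upd \<omega> u S)))\<^sup>*\<^sup>* (0,0) (u + dir_vec d)" by (meson rtranclp.rtrancl_into_rtrancl)
      then have "(edge ((fun_upd \<omega> u S)))\<^sup>*\<^sup>* (0,0) v" using mono[OF d(4)] by (meson rtranclp_trans)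
      with d(3) show ?thesis by (auto simp: reaches_boundary_def)
    qed
  next
    fix S
    assume "(fun_upd \<omega> u S) \<in> reaches_boundary n"
    then obtain v where v: "v \<in> boundary n" "(edge ((fun_upd \<omega> u S)))\<^sup>*\<^sup>* (0,0) v"
      by (auto simp: reaches_boundary_def)
    have "(edge \<omega>0)\<^sup>*\<^sup>* (0,0) w \<or> (r \<and> (\<exists>d\<in>S. (edge \<omega>0)\<^sup>*\<^sup>* (u + dir_vec d) w))"
      if "(edge ((fun_upd \<omega> u S)))\<^sup>*\<^sup>* (0,0) w" for w
      using that
    proof (induction rule: rtranclp_induct)
      case base then show ?case by simp
    next
      case (step y z)
      show ?case
      proof (cases "y = u")
        case True
        from step.hyps(2) True obtain d where d: "d \<in> S" "z = u + dir_vec d" by (auto simp: edge_def)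
        from step.IH True have "r" unfolding r_def
          by (auto intro: rtranclp_trans)
        with d show ?thesis by auto
      next
        case False
        then have "edge \<omega>0 y z" using step.hyps(2) by (auto simp: edge_def \<omega>0_def)
        with step.IH show ?thesis by (meson rtranclp.rtrancl_into_rtrancl)
      qed
    qed
    from this[OF v(2)] v(1) show "\<omega>0 \<in> reaches_boundary n \<or> S \<inter> A \<noteq> {}"
      by (auto simp: reaches_boundary_def A_def)
  qed
  then show "\<exists>c A. \<forall>S. ((fun_upd \<omega> u S) \<in> reaches_boundary n) = (c \<or> S \<inter> A \<noteq> {})" by blast
qed



definition hit :: "dir set \<Rightarrow> dir set set" where
  "hit A = {S. S \<inter> A \<noteq> {}}"

lemma H1: "finite I \<Longrightarrow> x \<notin> I \<Longrightarrow> Pi_pmf (insert x I) d p = bind_pmf (p x) (\<lambda>y. map_pmf (\<lambda>f. fun_upd f x y) (Pi_pmf I d p))"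
  by (simp add: Pi_pmf_insert' map_pmf_def)

lemma H2: "finite I \<Longrightarrow> x \<notin> I \<Longrightarrow> Pi_pmf (insert x I) d p = bind_pmf (Pi_pmf I d p) (\<lambda>f. map_pmf (\<lambda>y. fun_upd f x y) (p x))"
  by (simp add: H1 map_pmf_def) (rule bind_commute_pmf)

lemma hybrid:
  fixes p q :: "'k \<Rightarrow> dir set pmf"
  assumes fin: "finite I"
    and dom: "\<And>u A. emeasure (measure_pmf (p u)) (hit A) \<le> emeasure (measure_pmf (q u)) (hit A)"
  shows "good G \<Longrightarrow> emeasure (measure_pmf (Pi_pmf I d p)) {f. G f}
           \<le> emeasure (measure_pmf (Pi_pmf I d q)) {f. G f}"
  using fin
proof (induction I arbitrary: G rule: finite_induct)
  case empty
  then show ?case by simp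
next
  case (insert x I G)
  have Gy: "good (\<lambda>f. G (fun_upd f x y))" for y
    unfolding good_def
  proof (intro allI)
    fix \<omega> :: "'k \<Rightarrow> dir set" and u
    show "\<exists>c A. \<forall>S. G (fun_upd (fun_upd \<omega> u S) x y) = (c \<or> S \<inter> A \<noteq> {})"
    proof (cases "u = x")
      case True
      then show ?thesis by (intro exI[of _ "G (fun_upd \<omega> x y)"] exI[of _ "{}"]) simp
    next
      case False
      then have tw: "fun_upd (fun_upd \<omega> u S) x y = fun_upd (fun_upd \<omega> x y) u S" for S
        by (rule fun_upd_twist)
      have g: "\<forall>\<omega> u. \<exists>c A. \<forall>S. G (fun_upd \<omega> u S) = (c \<or> S \<inter> A \<noteq> {})"
        using insert.prems unfolding good_def by assumption
      obtain c A where cA: "\<forall>S. G (fun_upd (fun_upd \<omega> x y) u S) = (c \<or> S \<inter> A \<noteq> {})"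
        using g[rule_format, of "fun_upd \<omega> x y" u] by (elim exE)
      show ?thesis
        by (intro exI[of _ c] exI[of _ A] allI) (simp only: tw cA)
    qed
  qed
  have slice: "emeasure (measure_pmf (p x)) {y. G (fun_upd f x y)} \<le> emeasure (measure_pmf (q x)) {y. G (fun_upd f x y)}" for f
  proof -
    have g: "\<forall>\<omega> u. \<exists>c A. \<forall>S. G (fun_upd \<omega> u S) = (c \<or> S \<inter> A \<noteq> {})"
      using insert.prems unfolding good_def by assumption
    obtain c A where cA: "\<forall>S. G (fun_upd f x S) = (c \<or> S \<inter> A \<noteq> {})"
      using g[rule_format, of f x] by (elim exE)
    show ?thesis
    proof (cases c)
      case True
      then have "{y. G (fun_upd f x y)} = UNIV" using cA by auto
      then show ?thesis by (simp add: measure_pmf.emeasure_space_1[simplified])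
    next
      case False
      then have "{y. G (fun_upd f x y)} = hit A" using cA by (auto simp: hit_def)
      then show ?thesis using dom by simp
    qed
  qed
  have "emeasure (measure_pmf (Pi_pmf (insert x I) d p)) {f. G f}
      = (\<integral>\<^sup>+y. emeasure (measure_pmf (Pi_pmf I d p)) {f. G (fun_upd f x y)} \<partial>measure_pmf (p x))"
    using insert.hyps by (simp add: H1 vimage_def)
  also have "\<dots> \<le> (\<integral>\<^sup>+y. emeasure (measure_pmf (Pi_pmf I d q)) {f. G (fun_upd f x y)} \<partial>measure_pmf (p x))"
    by (intro nn_integral_mono insert.IH Gy)
  also have "\<dots> = (\<integral>\<^sup>+f. emeasure (measure_pmf (p x)) {y. G (fun_upd f x y)} \<partial>measure_pmf (Pi_pmf I d q))"
  proof -
    have e: "bind_pmf (p x) (\<lambda>y. map_pmf (\<lambda>f. fun_upd f x y) (Pi_pmf I d q))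
        = bind_pmf (Pi_pmf I d q) (\<lambda>f. map_pmf (\<lambda>y. fun_upd f x y) (p x))"
      by (simp add: map_pmf_def) (rule bind_commute_pmf)
    have "emeasure (measure_pmf (bind_pmf (p x) (\<lambda>y. map_pmf (\<lambda>f. fun_upd f x y) (Pi_pmf I d q)))) {f. G f}
        = emeasure (measure_pmf (bind_pmf (Pi_pmf I d q) (\<lambda>f. map_pmf (\<lambda>y. fun_upd f x y) (p x)))) {f. G f}"
      by (simp only: e)
    then show ?thesis by (simp add: vimage_def)
  qed
  also have "\<dots> \<le> (\<integral>\<^sup>+f. emeasure (measure_pmf (q x)) {y. G (fun_upd f x y)} \<partial>measure_pmf (Pi_pmf I d q))"
    by (intro nn_integral_mono slice)
  also have "\<dots> = emeasure (measure_pmf (Pi_pmf (insert x I) d q)) {f. G f}"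
    using insert.hyps by (simp add: H2 vimage_def)
  finally show ?case .
qed



instance dir :: finite
  by standard (simp add: UNIV_dir)

lemma distr_Pi_pmf:
  fixes P :: "'b pmf"
  assumes fin: "finite B"
  shows "distr (measure_pmf (Pi_pmf B dflt (\<lambda>_. P))) (PiM B (\<lambda>_. measure_pmf P)) (\<lambda>f. restrict f B)
       = PiM B (\<lambda>_. measure_pmf P)"
proof -
  interpret PP: product_prob_space "\<lambda>_. measure_pmf P" B
    by (rule product_prob_spaceI) (rule measure_pmf.prob_space_axioms)
  show ?thesis
  proof (rule PP.PiM_eqI)
    fix A assume A: "\<And>i. i \<in> B \<Longrightarrow> A i \<in> sets (measure_pmf P)"
    have "Pi\<^sub>E B A \<in> sets (PiM B (\<lambda>_. measure_pmf P))"
      using A by (intro sets_PiM_I_finite fin) auto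
    hence "emeasure (distr (measure_pmf (Pi_pmf B dflt (\<lambda>_. P))) (PiM B (\<lambda>_. measure_pmf P)) (\<lambda>f. restrict f B)) (Pi\<^sub>E B A)
        = emeasure (measure_pmf (Pi_pmf B dflt (\<lambda>_. P))) ((\<lambda>f. restrict f B) -` Pi\<^sub>E B A)"
      by (subst emeasure_distr) (auto simp: space_PiM)
    also have "\<dots> = emeasure (measure_pmf (Pi_pmf B dflt (\<lambda>_. P))) (PiE_dflt B dflt A)"
      by (intro emeasure_eq_AE AE_pmfI) (auto simp: PiE_dflt_def set_Pi_pmf fin)
    also have "\<dots> = (\<Prod>i\<in>B. emeasure (measure_pmf P) (A i))"
      by (simp add: measure_pmf.emeasure_eq_measure measure_Pi_pmf_PiE_dflt fin prod_ennreal)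
    finally show "emeasure (distr (measure_pmf (Pi_pmf B dflt (\<lambda>_. P))) (PiM B (\<lambda>_. measure_pmf P)) (\<lambda>f. restrict f B)) (Pi\<^sub>E B A)
        = (\<Prod>i\<in>B. emeasure (measure_pmf P) (A i))" .
  qed (simp_all add: fin)
qed

lemma product_law_eq:
  "measure (product_law P) (reaches_boundary n)
   = measure_pmf.prob (Pi_pmf (Bset n) {} (\<lambda>_. P)) (reaches_boundary n)"
proof -
  define B where "B = Bset n"
  define M where "M = (\<lambda>_::int\<times>int. measure_pmf P)"
  define X where "X = (\<lambda>\<omega>. restrict \<omega> B) ` reaches_boundary n"
  interpret PP: product_prob_space M UNIV
    unfolding M_def by (rule product_prob_spaceI) (rule measure_pmf.prob_space_axioms)
  have finB: "finite B" by (simp add: B_def finite_Bset)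
  have XP: "X \<subseteq> PiE B (\<lambda>_. UNIV)" by (auto simp: X_def)
  have finX: "finite X"
    by (rule finite_subset[OF XP]) (intro finite_PiE finB, simp)
  have Xs: "X \<in> sets (PiM B M)"
  proof (rule sets.countable)
    fix a assume "a \<in> X"
    then have aE: "a \<in> extensional B" using XP by (auto simp: PiE_def)
    have "{a} = PiE B (\<lambda>i. {a i})"
    proof (intro set_eqI iffI)
      fix x assume "x \<in> PiE B (\<lambda>i. {a i})"
      then have "x \<in> extensional B" "\<forall>i\<in>B. x i = a i" by (auto simp: PiE_iff)
      then show "x \<in> {a}" using aE by (auto intro: extensionalityI)
    qed (use aE in \<open>auto simp: PiE_iff\<close>)
    then show "{a} \<in> sets (PiM B M)"
      by (simp add: sets_PiM_I_finite finB M_def)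
  qed (use finX in \<open>rule countable_finite\<close>)
  have loc: "restrict \<omega> B \<in> X \<longleftrightarrow> \<omega> \<in> reaches_boundary n" for \<omega>
  proof
    assume "restrict \<omega> B \<in> X"
    then obtain \<omega>' where "\<omega>' \<in> reaches_boundary n" "restrict \<omega> B = restrict \<omega>' B"
      by (auto simp: X_def)
    then show "\<omega> \<in> reaches_boundary n"
      using rb_local[of n \<omega> \<omega>'] by (metis B_def restrict_apply')
  qed (auto simp: X_def)
  have emb: "prod_emb UNIV M B X = reaches_boundary n"
    by (auto simp: prod_emb_def M_def loc)
  have "emeasure (product_law P) (reaches_boundary n) = emeasure (PiM B M) X"
    unfolding product_law_def M_def[symmetric] emb[symmetric]
    by (rule PP.emeasure_PiM_emb') (auto simp: finB Xs)
  also have "\<dots> = emeasure (distr (measure_pmf (Pi_pmf B {} (\<lambda>_. P))) (PiM B M) (\<lambda>f. restrict f B)) X"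
    unfolding M_def by (simp add: distr_Pi_pmf finB)
  also have "\<dots> = emeasure (measure_pmf (Pi_pmf B {} (\<lambda>_. P))) ((\<lambda>f. restrict f B) -` X)"
    using Xs by (subst emeasure_distr) (auto simp: space_PiM M_def)
  also have "(\<lambda>f. restrict f B) -` X = reaches_boundary n"
    using loc by auto
  finally show ?thesis
    by (simp add: measure_def B_def)
qed



definition cs_w :: "real \<Rightarrow> dir set \<Rightarrow> real" where
  "cs_w \<alpha> S = (if S \<in> corner_pairs then \<alpha> else if S \<in> stick_pairs then (1 - 4 * \<alpha>) / 2 else 0)"

definition Six :: "dir set set" where
  "Six = {{North, East}, {North, West}, {South, East}, {South, West}, {North, South}, {East, West}}"

lemma Six_eq: "Six = corner_pairs \<union> stick_pairs"
  by (auto simp: Six_def corner_pairs_def stick_pairs_def)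

lemma cs_w_sum: "(\<Sum>S\<in>Six. f S) = f {North, East} + f {North, West} + f {South, East} + f {South, West} + f {North, South} + f {East, West}"
  unfolding Six_def by (simp add: doubleton_eq_iff insert_commute add_ac)

lemma cs_w_vals:
  "cs_w \<alpha> {North, East} = \<alpha>" "cs_w \<alpha> {North, West} = \<alpha>" "cs_w \<alpha> {South, East} = \<alpha>"
  "cs_w \<alpha> {South, West} = \<alpha>" "cs_w \<alpha> {North, South} = (1 - 4 * \<alpha>) / 2"
  "cs_w \<alpha> {East, West} = (1 - 4 * \<alpha>) / 2"
  by (auto simp: cs_w_def corner_pairs_def stick_pairs_def doubleton_eq_iff)

lemma cs_w_out: "S \<notin> Six \<Longrightarrow> cs_w \<alpha> S = 0"
  by (auto simp: cs_w_def Six_eq)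

lemma pmf_cs:
  assumes "0 \<le> \<alpha>" "\<alpha> \<le> 1/4"
  shows "pmf (corner_stick \<alpha>) S = cs_w \<alpha> S"
proof -
  have nn: "\<And>S. 0 \<le> cs_w \<alpha> S" using assms by (auto simp: cs_w_def)
  have "(\<integral>\<^sup>+x. ennreal (cs_w \<alpha> x) \<partial>count_space UNIV) = (\<Sum>x\<in>Six. ennreal (cs_w \<alpha> x))"
    by (rule nn_integral_count_space') (auto simp: cs_w_out Six_def)
  also have "\<dots> = ennreal (\<Sum>x\<in>Six. cs_w \<alpha> x)"
    using nn by (simp add: sum_ennreal)
  also have "(\<Sum>x\<in>Six. cs_w \<alpha> x) = 1"
    by (simp add: cs_w_sum cs_w_vals)
  finally have one: "(\<integral>\<^sup>+x. ennreal (cs_w \<alpha> x) \<partial>count_space UNIV) = 1" by simp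
  have cs: "corner_stick \<alpha> = embed_pmf (cs_w \<alpha>)"
    unfolding corner_stick_def cs_w_def[abs_def] by (rule refl)
  show ?thesis
    unfolding cs by (rule pmf_embed_pmf[OF nn one])
qed

lemma prob_cs:
  assumes "0 \<le> \<alpha>" "\<alpha> \<le> 1/4"
  shows "measure_pmf.prob (corner_stick \<alpha>) X = (\<Sum>S\<in>Six. cs_w \<alpha> S * indicator X S)"
proof -
  have "measure_pmf.prob (corner_stick \<alpha>) X = (\<integral>S. indicator X S \<partial>measure_pmf (corner_stick \<alpha>))"
    by simp
  also have "\<dots> = (\<Sum>S\<in>Six. indicator X S * pmf (corner_stick \<alpha>) S)"
  proof (rule integral_measure_pmf_real)
    fix a assume "a \<in> set_pmf (corner_stick \<alpha>)"
    then have "pmf (corner_stick \<alpha>) a \<noteq> 0" by (simp add: set_pmf_iff)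
    then have "cs_w \<alpha> a \<noteq> 0" by (simp add: pmf_cs[OF assms])
    then show "a \<in> Six" using cs_w_out by blast
  qed (simp add: Six_def)
  also have "\<dots> = (\<Sum>S\<in>Six. cs_w \<alpha> S * indicator X S)"
    by (simp add: pmf_cs[OF assms] mult.commute)
  finally show ?thesis .
qed

lemma iid_half: "iid_law (1/2) = pmf_of_set (Pow UNIV)"
  unfolding iid_law_def using pmf_of_set_Pow_conv_bernoulli[of "UNIV :: dir set" False]
  by simp

lemma card_dir: "CARD(dir) = 4"
  by (simp add: UNIV_dir)

lemma prob_iid: "measure_pmf.prob (iid_law (1/2)) {S. S \<inter> A \<noteq> {}} = 1 - card (Pow (- A)) / 16"
proof -
  have c: "card (UNIV :: dir set set) = 16"
    by (simp add: card_UNIV_set UNIV_dir card_insert_if)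
  have "{S. S \<inter> A \<noteq> {}} = UNIV - Pow (- A)" by auto
  then have "measure_pmf.prob (iid_law (1/2)) {S. S \<inter> A \<noteq> {}} = 1 - measure_pmf.prob (iid_law (1/2)) (Pow (-A))"
    using measure_pmf.prob_compl[of "Pow (-A)" "iid_law (1/2)"] by simp
  also have "measure_pmf.prob (iid_law (1/2)) (Pow (-A)) = card (Pow (- A)) / 16"
    by (simp add: iid_half measure_pmf_of_set c card_UNIV_set card_dir)
  finally show ?thesis .
qed

lemma card_compl: "card (- A) = (if North \<in> A then 0 else 1) + (if South \<in> A then 0 else 1) + (if East \<in> A then 0 else 1) + (if West \<in> A then (0::nat) else 1)"
proof -
  have "card (- A) = (\<Sum>d\<in>UNIV. if d \<in> A then 0 else (1::nat))"
    by (simp add: sum.If_cases Compl_eq_Diff_UNIV)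
  also have "\<dots> = (if North \<in> A then 0 else 1) + (if South \<in> A then 0 else 1) + (if East \<in> A then 0 else 1) + (if West \<in> A then (0::nat) else 1)"
    by (simp add: UNIV_dir)
  finally show ?thesis .
qed

lemma ind2: "indicator {S. S \<inter> A \<noteq> {}} {a, b} = (if a \<in> A \<or> b \<in> A then 1 else (0::real))"
  by (auto simp: indicator_def)

lemma local_cmp:
  assumes "1/8 \<le> \<alpha>" "\<alpha> \<le> 1/4"
  shows "measure_pmf.prob (iid_law (1/2)) {S. S \<inter> A \<noteq> {}} \<le> measure_pmf.prob (corner_stick \<alpha>) {S. S \<inter> A \<noteq> {}}"
proof -
  have a0: "0 \<le> \<alpha>" using assms by simp
  have ii: "measure_pmf.prob (iid_law (1/2)) {S. S \<inter> A \<noteq> {}} = 1 - 2 ^ card (- A) / 16"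
    by (simp add: prob_iid card_Pow)
  show ?thesis
    unfolding ii prob_cs[OF a0 assms(2)] cs_w_sum cs_w_vals card_compl ind2
    using assms
    apply (cases "North \<in> A"; cases "South \<in> A"; cases "East \<in> A"; cases "West \<in> A")
    apply (simp_all only: if_True if_False simp_thms)
    apply (simp_all add: diff_divide_distrib)
    done
qed


theorem mainTheorem14:
  fixes \<alpha> :: real
  assumes "1/8 \<le> \<alpha>" and "\<alpha> \<le> 1/4"
  shows "(\<forall>A :: dir set. measure_pmf.prob (iid_law (1/2)) {S. S \<inter> A \<noteq> {}}
            \<le> measure_pmf.prob (corner_stick \<alpha>) {S. S \<inter> A \<noteq> {}})
         \<and> (\<forall>n :: nat. measure (product_law (iid_law (1/2))) (reaches_boundary n)
            \<le> measure (product_law (corner_stick \<alpha>)) (reaches_boundary n))"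
proof (intro conjI allI)
  fix A :: "dir set"
  show "measure_pmf.prob (iid_law (1/2)) {S. S \<inter> A \<noteq> {}}
            \<le> measure_pmf.prob (corner_stick \<alpha>) {S. S \<inter> A \<noteq> {}}"
    by (rule local_cmp[OF assms])
next
  fix n :: nat
  have dom: "emeasure (measure_pmf ((\<lambda>_. iid_law (1/2)) u)) (hit A)
      \<le> emeasure (measure_pmf ((\<lambda>_. corner_stick \<alpha>) u)) (hit A)" for u :: "int \<times> int" and A
    using local_cmp[OF assms, of A] by (simp add: hit_def measure_pmf.emeasure_eq_measure)
  have "emeasure (measure_pmf (Pi_pmf (Bset n) {} (\<lambda>_. iid_law (1/2)))) {f. f \<in> reaches_boundary n}
      \<le> emeasure (measure_pmf (Pi_pmf (Bset n) {} (\<lambda>_. corner_stick \<alpha>))) {f. f \<in> reaches_boundary n}"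
    by (rule hybrid[where I="Bset n" and p="\<lambda>_. iid_law (1/2)" and q="\<lambda>_. corner_stick \<alpha>", OF finite_Bset dom good_rb])
  then have "measure_pmf.prob (Pi_pmf (Bset n) {} (\<lambda>_. iid_law (1/2))) (reaches_boundary n)
      \<le> measure_pmf.prob (Pi_pmf (Bset n) {} (\<lambda>_. corner_stick \<alpha>)) (reaches_boundary n)"
    by (simp add: measure_pmf.emeasure_eq_measure)
  then show "measure (product_law (iid_law (1/2))) (reaches_boundary n)
            \<le> measure (product_law (corner_stick \<alpha>)) (reaches_boundary n)"
    by (simp add: product_law_eq)
qed

end
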